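(* Every term $P$ over $\Sigma_m$ is provably equal, from $\mathrm{Md}$ in equational logic, to a Standard Meadow Form whose variables are among the variables of $P$.
   Context: The signature of meadows is $\Sigma_m=(0,1,+,\cdot,-,{}^{-1})$. $\mathrm{Md}$ is the set of equations: $(x+y)+z=x+(y+z)$, $x+y=y+x$, $x+0=x$, $x+(-x)=0$, $(x\cdot y)\cdot z=x\cdot(y\cdot z)$, $x\cdot y=y\cdot x$, $1\cdot x=x$, $x\cdot(y+z)=x\cdot y+x\cdot z$, $(x^{-1})^{-1}=x$, $x\cdot(x\cdot x^{-1})=x$. Notation: $t/u$ abbreviates $t\cdot u^{-1}$; $1_t$ abbreviates $t\cdot t^{-1}$ and $0_t$ abbreviates $1-1_t$. A polynomial is a $\Sigma_m$-term not containing ${}^{-1}$. SMFs of level $n$: an SMF of level $0$ is any term $s/t$ with $s,t$ polynomials; an SMF of level $n+1$ is any term $0_t\cdot P+1_t\cdot Q$ with $t$ a polynomial and $P,Q$ SMFs of level $n$. A Standard Meadow Form (SMF) is an SMF of some level. *)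

theory Defs
  imports Main
begin

datatype 'v mterm =
    MVar 'v
  | MZero
  | MOne
  | MAdd "'v mterm" "'v mterm"
  | MMul "'v mterm" "'v mterm"
  | MNeg "'v mterm"
  | MInv "'v mterm"

fun mvars :: "'v mterm \<Rightarrow> 'v set" where
  "mvars (MVar x) = {x}"
| "mvars MZero = {}"
| "mvars MOne = {}"
| "mvars (MAdd s t) = mvars s \<union> mvars t"
| "mvars (MMul s t) = mvars s \<union> mvars t"
| "mvars (MNeg s) = mvars s"
| "mvars (MInv s) = mvars s"

fun polynomial :: "'v mterm \<Rightarrow> bool" where
  "polynomial (MVar x) = True"
| "polynomial MZero = True"
| "polynomial MOne = True"
| "polynomial (MAdd s t) = (polynomial s \<and> polynomial t)"
| "polynomial (MMul s t) = (polynomial s \<and> polynomial t)"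
| "polynomial (MNeg s) = polynomial s"
| "polynomial (MInv s) = False"

text \<open>Abbreviations t/u, 1_t, 0_t = 1 - 1_t (binary minus is x + (-y)).\<close>
definition mdiv :: "'v mterm \<Rightarrow> 'v mterm \<Rightarrow> 'v mterm" where
  "mdiv t u = MMul t (MInv u)"

definition one_of :: "'v mterm \<Rightarrow> 'v mterm" where
  "one_of t = MMul t (MInv t)"

definition zero_of :: "'v mterm \<Rightarrow> 'v mterm" where
  "zero_of t = MAdd MOne (MNeg (one_of t))"

text \<open>Equational logic derivability from Md: reflexivity, symmetry, transitivity,
  congruence for all operations, and all substitution instances of the axioms of Md.\<close>
inductive md_eq :: "'v mterm \<Rightarrow> 'v mterm \<Rightarrow> bool" where
  refl: "md_eq t t"
| sym: "md_eq s t \<Longrightarrow> md_eq t s"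
| trans: "md_eq s t \<Longrightarrow> md_eq t u \<Longrightarrow> md_eq s u"
| cong_add: "md_eq s1 t1 \<Longrightarrow> md_eq s2 t2 \<Longrightarrow> md_eq (MAdd s1 s2) (MAdd t1 t2)"
| cong_mul: "md_eq s1 t1 \<Longrightarrow> md_eq s2 t2 \<Longrightarrow> md_eq (MMul s1 s2) (MMul t1 t2)"
| cong_neg: "md_eq s t \<Longrightarrow> md_eq (MNeg s) (MNeg t)"
| cong_inv: "md_eq s t \<Longrightarrow> md_eq (MInv s) (MInv t)"
| add_assoc: "md_eq (MAdd (MAdd x y) z) (MAdd x (MAdd y z))"
| add_comm: "md_eq (MAdd x y) (MAdd y x)"
| add_zero: "md_eq (MAdd x MZero) x"
| add_neg: "md_eq (MAdd x (MNeg x)) MZero"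
| mul_assoc: "md_eq (MMul (MMul x y) z) (MMul x (MMul y z))"
| mul_comm: "md_eq (MMul x y) (MMul y x)"
| mul_one: "md_eq (MMul MOne x) x"
| distrib: "md_eq (MMul x (MAdd y z)) (MAdd (MMul x y) (MMul x z))"
| inv_inv: "md_eq (MInv (MInv x)) x"
| ril: "md_eq (MMul x (MMul x (MInv x))) x"

fun smf_level :: "nat \<Rightarrow> 'v mterm \<Rightarrow> bool" where
  "smf_level 0 P = (\<exists>s t. polynomial s \<and> polynomial t \<and> P = mdiv s t)"
| "smf_level (Suc n) P = (\<exists>t A B. polynomial t \<and> smf_level n A \<and> smf_level n B \<and>
       P = MAdd (MMul (zero_of t) A) (MMul (one_of t) B))"

definition SMF :: "'v mterm \<Rightarrow> bool" where
  "SMF P = (\<exists>n. smf_level n P)"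

end

theory Submission imports Defs begin

lemma equivp_md: "equivp md_eq"
  by (intro equivpI reflpI sympI transpI) (auto intro: md_eq.intros)

quotient_type 'v mq = "'v mterm" / md_eq by (rule equivp_md)

fun evb :: "'v mterm \<Rightarrow> bool" where
  "evb (MVar x) = False"
| "evb MZero = False"
| "evb MOne = True"
| "evb (MAdd s t) = (evb s \<noteq> evb t)"
| "evb (MMul s t) = (evb s \<and> evb t)"
| "evb (MNeg s) = evb s"
| "evb (MInv s) = evb s"

lemma md_evb: "md_eq s t \<Longrightarrow> evb s = evb t"
  by (induction rule: md_eq.induct) auto

instantiation mq :: (type) comm_ring_1
begin
lift_definition zero_mq :: "'a mq" is MZero .
lift_definition one_mq :: "'a mq" is MOne .
lift_definition plus_mq :: "'a mq \<Rightarrow> 'a mq \<Rightarrow> 'a mq" is MAdd by (rule md_eq.cong_add)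
lift_definition times_mq :: "'a mq \<Rightarrow> 'a mq \<Rightarrow> 'a mq" is MMul by (rule md_eq.cong_mul)
lift_definition uminus_mq :: "'a mq \<Rightarrow> 'a mq" is MNeg by (rule md_eq.cong_neg)
definition minus_mq :: "'a mq \<Rightarrow> 'a mq \<Rightarrow> 'a mq" where "minus_mq a b = a + - b"
instance
proof
  fix a b c :: "'a mq"
  show "a + b + c = a + (b + c)" by transfer (rule md_eq.add_assoc)
  show "a + b = b + a" by transfer (rule md_eq.add_comm)
  show "0 + a = a" by transfer (meson md_eq.add_comm md_eq.add_zero md_eq.trans)
  show "- a + a = 0" by transfer (meson md_eq.add_comm md_eq.add_neg md_eq.trans)
  show "a - b = a + - b" by (simp add: minus_mq_def)
  show "a * b * c = a * (b * c)" by transfer (rule md_eq.mul_assoc)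
  show "a * b = b * a" by transfer (rule md_eq.mul_comm)
  show "1 * a = a" by transfer (rule md_eq.mul_one)
  show "(a + b) * c = a * c + b * c" by transfer
      (meson md_eq.mul_comm md_eq.distrib md_eq.trans md_eq.cong_add)
  show "(0::'a mq) \<noteq> 1" by transfer (auto dest: md_evb)
qed
end

lift_definition inv :: "'v mq \<Rightarrow> 'v mq" is MInv by (rule md_eq.cong_inv)

lemma inv_inv[simp]: "inv (inv x) = x" by transfer (rule md_eq.inv_inv)
lemma ril: "x * x * inv x = x" by transfer (meson md_eq.mul_assoc md_eq.ril md_eq.trans)
lemma ril2: "x * inv x * inv x = inv x"
  using ril[of "inv x"] by (simp add: mult_ac)

lemma inv_uniq:
  fixes x a :: "'v mq"
  assumes "x * x * a = x" "x * a * a = a"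
  shows "inv x = a"
proof -
  have u: "a = b" if "x*x*a = x" "x*a*a = a" "x*x*b = x" "x*b*b = b" for a b
  proof -
    have "x*a = x*b*(x*a)" using that by (metis mult.assoc mult.commute)
    moreover have "x*b = x*a*(x*b)" using that by (metis mult.assoc mult.commute)
    ultimately have e: "x*a = x*b" by (simp add: mult.commute)
    have "a = x*a*a" using that by simp
    also have "\<dots> = x*b*a" using e by simp
    also have "\<dots> = b*(x*a)" by (simp add: mult_ac)
    also have "\<dots> = b*(x*b)" using e by simp
    also have "\<dots> = b" using that by (simp add: mult_ac)
    finally show ?thesis .
  qed
  show ?thesis by (rule u[OF ril ril2 assms])
qed

lemma inv_mult: "inv (x*y) = inv x * inv y"
  apply (rule inv_uniq)
  using ril[of x] ril[of y] ril2[of x] ril2[of y]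
  by (metis mult.assoc mult.commute)+

lemma inv_one[simp]: "inv 1 = 1" using ril[of 1] by simp

definition ev :: "'v mterm \<Rightarrow> 'v mq" where "ev = abs_mq"

lemma ev_simps[simp]:
  "ev MZero = 0" "ev MOne = 1" "ev (MAdd a b) = ev a + ev b" "ev (MMul a b) = ev a * ev b"
  "ev (MNeg a) = - ev a" "ev (MInv a) = inv (ev a)"
  unfolding ev_def
  by (simp_all add: zero_mq_def one_mq_def plus_mq.abs_eq times_mq.abs_eq uminus_mq.abs_eq inv.abs_eq)

lemma ev_eq: "md_eq a b \<longleftrightarrow> ev a = ev b" by (simp add: ev_def mq.abs_eq_iff)

lemma ev_node: "ev (MAdd (MMul (zero_of t) A) (MMul (one_of t) B)) =
   (1 - ev t * inv (ev t)) * ev A + ev t * inv (ev t) * ev B"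
  by (simp add: zero_of_def one_of_def)

lemma ev_div[simp]: "ev (mdiv s t) = ev s * inv (ev t)" by (simp add: mdiv_def)


lemma idem_mult:
  fixes E a b c d :: "'a::comm_ring_1"
  assumes "E*E = E"
  shows "((1-E)*a + E*b)*((1-E)*c + E*d) = (1-E)*(a*c) + E*(b*d)"
proof -
  have "((1-E)*a + E*b)*((1-E)*c + E*d) = (1-E)*(a*c) + E*(b*d) + (E*E - E)*(a*c - a*d - b*c + b*d)"
    by (simp add: algebra_simps)
  thus ?thesis using assms by simp
qed

lemma leaf_add_alg:
  fixes s t u v it iv :: "'a::comm_ring_1"
  assumes ht: "t*it*it = it" and hv: "v*iv*iv = iv"
  shows "(1 - t*it)*((1 - v*iv)*(0*1) + v*iv*(u*iv)) + t*it*((1-v*iv)*(s*it) + v*iv*((s*v+u*t)*(it*iv))) = s*it + u*iv"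
proof -
  define htt where "htt = t*it*it - it"
  define hvv where "hvv = v*iv*iv - iv"
  have "(1 - t*it)*((1 - v*iv)*(0*1) + v*iv*(u*iv)) + t*it*((1-v*iv)*(s*it) + v*iv*((s*v+u*t)*(it*iv)))
     = s*it + u*iv + hvv*(u + s*v*htt + s*v*it + u*t*htt) + htt*(s + u*t*iv)"
    unfolding htt_def hvv_def by (simp add: algebra_simps)
  moreover have "htt = 0" "hvv = 0" using ht hv by (simp_all add: htt_def hvv_def)
  ultimately show ?thesis by simp
qed

lemma idem_e: "x * inv x * (x * inv x) = x * inv x"
  using ril2[of x] by (metis mult.assoc mult.commute)

lemma inv_node: "inv ((1 - t*inv t)*a + t*inv t*b) = (1 - t*inv t)*inv a + t*inv t*inv b"
  apply (rule inv_uniq)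
  apply (simp_all add: idem_mult[OF idem_e] ril ril2)
  done

definition node :: "'v mterm \<Rightarrow> 'v mterm \<Rightarrow> 'v mterm \<Rightarrow> 'v mterm" where
  "node t A B = MAdd (MMul (zero_of t) A) (MMul (one_of t) B)"

lemma ev_node2[simp]: "ev (node t A B) = (1 - ev t * inv (ev t)) * ev A + ev t * inv (ev t) * ev B"
  by (simp add: node_def zero_of_def one_of_def)

lemma mvars_node[simp]: "mvars (node t A B) = mvars t \<union> mvars A \<union> mvars B"
  by (auto simp: node_def zero_of_def one_of_def)

lemma mvars_div[simp]: "mvars (mdiv s t) = mvars s \<union> mvars t"
  by (simp add: mdiv_def)

inductive gsmf :: "'v mterm \<Rightarrow> bool" where
  leaf: "polynomial s \<Longrightarrow> polynomial t \<Longrightarrow> gsmf (mdiv s t)"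
| nd: "polynomial t \<Longrightarrow> gsmf A \<Longrightarrow> gsmf B \<Longrightarrow> gsmf (node t A B)"

lemma gs_neg: "gsmf A \<Longrightarrow> \<exists>C. gsmf C \<and> mvars C \<subseteq> mvars A \<and> ev C = - ev A"
proof (induction rule: gsmf.induct)
  case (leaf s t)
  then show ?case by (intro exI[of _ "mdiv (MNeg s) t"]) (auto intro: gsmf.leaf)
next
  case (nd t A B)
  then obtain CA CB where "gsmf CA" "mvars CA \<subseteq> mvars A" "ev CA = - ev A"
     "gsmf CB" "mvars CB \<subseteq> mvars B" "ev CB = - ev B" by blast
  moreover have "ev (node t CA CB) = - ev (node t A B)"
    unfolding ev_node2 \<open>ev CA = _\<close> \<open>ev CB = _\<close> by (simp add: algebra_simps)
  ultimately show ?case using nd by (intro exI[of _ "node t CA CB"]) (auto intro: gsmf.nd)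
qed

lemma gs_inv: "gsmf A \<Longrightarrow> \<exists>C. gsmf C \<and> mvars C \<subseteq> mvars A \<and> ev C = inv (ev A)"
proof (induction rule: gsmf.induct)
  case (leaf s t)
  then show ?case by (intro exI[of _ "mdiv t s"]) (auto intro: gsmf.leaf simp: inv_mult mult.commute)
next
  case (nd t A B)
  then obtain CA CB where "gsmf CA" "mvars CA \<subseteq> mvars A" "ev CA = inv (ev A)"
     "gsmf CB" "mvars CB \<subseteq> mvars B" "ev CB = inv (ev B)" by blast
  with nd show ?case by (intro exI[of _ "node t CA CB"]) (auto intro: gsmf.nd simp: inv_node)
qed

lemma gs_mul_leaf: "gsmf B \<Longrightarrow> polynomial s \<Longrightarrow> polynomial t \<Longrightarrow>
   \<exists>C. gsmf C \<and> mvars C \<subseteq> mvars s \<union> mvars t \<union> mvars B \<and> ev C = ev (mdiv s t) * ev B"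
proof (induction rule: gsmf.induct)
  case (leaf u v)
  then show ?case by (intro exI[of _ "mdiv (MMul s u) (MMul t v)"])
     (auto intro: gsmf.leaf simp: inv_mult mult_ac)
next
  case (nd v A B)
  then obtain CA CB where "gsmf CA" "mvars CA \<subseteq> mvars s \<union> mvars t \<union> mvars A" "ev CA = ev (mdiv s t) * ev A"
     "gsmf CB" "mvars CB \<subseteq> mvars s \<union> mvars t \<union> mvars B" "ev CB = ev (mdiv s t) * ev B" by blast
  moreover have "ev (node v CA CB) = ev (mdiv s t) * ev (node v A B)"
    unfolding ev_node2 \<open>ev CA = _\<close> \<open>ev CB = _\<close> by (simp only: algebra_simps)
  ultimately show ?case using nd by (intro exI[of _ "node v CA CB"]) (auto intro: gsmf.nd)
qed

lemma gs_mul: "gsmf A \<Longrightarrow> gsmf B \<Longrightarrow> \<exists>C. gsmf C \<and> mvars C \<subseteq> mvars A \<union> mvars B \<and> ev C = ev A * ev B"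
proof (induction arbitrary: B rule: gsmf.induct)
  case (leaf s t)
  then show ?case using gs_mul_leaf[of B s t] by auto
next
  case (nd t A1 A2)
  then obtain CA CB where "gsmf CA" "mvars CA \<subseteq> mvars A1 \<union> mvars B" "ev CA = ev A1 * ev B"
     "gsmf CB" "mvars CB \<subseteq> mvars A2 \<union> mvars B" "ev CB = ev A2 * ev B" by meson
  moreover have "ev (node t CA CB) = ev (node t A1 A2) * ev B"
    unfolding ev_node2 \<open>ev CA = _\<close> \<open>ev CB = _\<close> by (simp only: algebra_simps)
  ultimately show ?case using nd by (intro exI[of _ "node t CA CB"]) (auto intro: gsmf.nd)
qed

lemma gs_add_leaf: "gsmf B \<Longrightarrow> polynomial s \<Longrightarrow> polynomial t \<Longrightarrow>
   \<exists>C. gsmf C \<and> mvars C \<subseteq> mvars s \<union> mvars t \<union> mvars B \<and> ev C = ev (mdiv s t) + ev B"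
proof (induction rule: gsmf.induct)
  case (leaf u v)
  let ?C = "node t (node v (mdiv MZero MOne) (mdiv u v)) (node v (mdiv s t) (mdiv (MAdd (MMul s v) (MMul u t)) (MMul t v)))"
  have "ev ?C = ev (mdiv s t) + ev (mdiv u v)"
    using leaf_add_alg[OF ril2[of "ev t"] ril2[of "ev v"], of "ev u" "ev s"]
    by (simp add: inv_mult)
  with leaf show ?case by (intro exI[of _ ?C]) (auto intro!: gsmf.leaf gsmf.nd)
next
  case (nd v A B)
  then obtain CA CB where "gsmf CA" "mvars CA \<subseteq> mvars s \<union> mvars t \<union> mvars A" "ev CA = ev (mdiv s t) + ev A"
     "gsmf CB" "mvars CB \<subseteq> mvars s \<union> mvars t \<union> mvars B" "ev CB = ev (mdiv s t) + ev B" by blast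
  moreover have "ev (node v CA CB) = ev (mdiv s t) + ev (node v A B)"
    unfolding ev_node2 \<open>ev CA = _\<close> \<open>ev CB = _\<close> by (simp add: algebra_simps)
  ultimately show ?case using nd by (intro exI[of _ "node v CA CB"]) (auto intro: gsmf.nd)
qed

lemma gs_add: "gsmf A \<Longrightarrow> gsmf B \<Longrightarrow> \<exists>C. gsmf C \<and> mvars C \<subseteq> mvars A \<union> mvars B \<and> ev C = ev A + ev B"
proof (induction arbitrary: B rule: gsmf.induct)
  case (leaf s t)
  then show ?case using gs_add_leaf[of B s t] by auto
next
  case (nd t A1 A2)
  then obtain CA CB where "gsmf CA" "mvars CA \<subseteq> mvars A1 \<union> mvars B" "ev CA = ev A1 + ev B"
     "gsmf CB" "mvars CB \<subseteq> mvars A2 \<union> mvars B" "ev CB = ev A2 + ev B" by meson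
  moreover have "ev (node t CA CB) = ev (node t A1 A2) + ev B"
    unfolding ev_node2 \<open>ev CA = _\<close> \<open>ev CB = _\<close> by (simp add: algebra_simps)
  ultimately show ?case using nd by (intro exI[of _ "node t CA CB"]) (auto intro: gsmf.nd)
qed

lemma gs_all: "\<exists>C. gsmf C \<and> mvars C \<subseteq> mvars P \<and> ev C = ev P"
proof (induction P)
  case (MVar x)
  show ?case by (intro exI[of _ "mdiv (MVar x) MOne"]) (auto intro: gsmf.leaf)
next
  case MZero
  show ?case by (intro exI[of _ "mdiv MZero MOne"]) (auto intro: gsmf.leaf)
next
  case MOne
  show ?case by (intro exI[of _ "mdiv MOne MOne"]) (auto intro: gsmf.leaf)
next
  case (MAdd P1 P2)
  then obtain C1 C2 where "gsmf C1" "mvars C1 \<subseteq> mvars P1" "ev C1 = ev P1"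
    "gsmf C2" "mvars C2 \<subseteq> mvars P2" "ev C2 = ev P2" by blast
  then show ?case using gs_add[of C1 C2] by auto
next
  case (MMul P1 P2)
  then obtain C1 C2 where "gsmf C1" "mvars C1 \<subseteq> mvars P1" "ev C1 = ev P1"
    "gsmf C2" "mvars C2 \<subseteq> mvars P2" "ev C2 = ev P2" by blast
  then show ?case using gs_mul[of C1 C2] by auto
next
  case (MNeg P1)
  then obtain C1 where "gsmf C1" "mvars C1 \<subseteq> mvars P1" "ev C1 = ev P1" by blast
  then show ?case using gs_neg[of C1] by auto
next
  case (MInv P1)
  then obtain C1 where "gsmf C1" "mvars C1 \<subseteq> mvars P1" "ev C1 = ev P1" by blast
  then show ?case using gs_inv[of C1] by auto
qed

lemma level_node: "polynomial t \<Longrightarrow> smf_level m A \<Longrightarrow> smf_level m B \<Longrightarrow> smf_level (Suc m) (node t A B)"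
  unfolding smf_level.simps node_def by blast

lemma lift_level: "n \<le> m \<Longrightarrow> smf_level n P \<Longrightarrow> \<exists>Q. smf_level m Q \<and> mvars Q \<subseteq> mvars P \<and> ev Q = ev P"
proof (induction m rule: dec_induct)
  case base
  then show ?case by blast
next
  case (step m)
  then obtain Q where Q: "smf_level m Q" "mvars Q \<subseteq> mvars P" "ev Q = ev P" by blast
  have "smf_level (Suc m) (node MZero Q Q)" using Q by (intro level_node) auto
  moreover have "ev (node MZero Q Q) = ev Q" by (simp add: algebra_simps)
  moreover have "mvars (node MZero Q Q) \<subseteq> mvars P" using Q by simp
  ultimately show ?case using Q by (intro exI[of _ "node MZero Q Q"] conjI) simp_all
qed

lemma gs_smf: "gsmf P \<Longrightarrow> \<exists>n Q. smf_level n Q \<and> mvars Q \<subseteq> mvars P \<and> ev Q = ev P"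
proof (induction rule: gsmf.induct)
  case (leaf s t)
  then show ?case by (intro exI[of _ 0] exI[of _ "mdiv s t"]) auto
next
  case (nd t A B)
  then obtain na QA nb QB where A: "smf_level na QA" "mvars QA \<subseteq> mvars A" "ev QA = ev A"
    and B: "smf_level nb QB" "mvars QB \<subseteq> mvars B" "ev QB = ev B" by blast
  obtain QA' where A': "smf_level (max na nb) QA'" "mvars QA' \<subseteq> mvars QA" "ev QA' = ev QA"
    using lift_level[OF _ A(1), of "max na nb"] by auto
  obtain QB' where B': "smf_level (max na nb) QB'" "mvars QB' \<subseteq> mvars QB" "ev QB' = ev QB"
    using lift_level[OF _ B(1), of "max na nb"] by auto
  have "smf_level (Suc (max na nb)) (node t QA' QB')" using A' B' nd(1) by (intro level_node) auto
  moreover have "mvars (node t QA' QB') \<subseteq> mvars (node t A B)" using A B A' B' by auto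
  moreover have "ev (node t QA' QB') = ev (node t A B)" using A B A' B' by simp
  ultimately show ?case by (intro exI[of _ "Suc (max na nb)"] exI[of _ "node t QA' QB'"] conjI)
qed

theorem theorem1:
  fixes P :: "'v mterm"
  shows "\<exists>Q. SMF Q \<and> mvars Q \<subseteq> mvars P \<and> md_eq P Q"
proof -
  from gs_all[of P] obtain C where C: "gsmf C" "mvars C \<subseteq> mvars P" "ev C = ev P"
    by (elim exE conjE)
  from gs_smf[OF C(1)] obtain n Q where Q: "smf_level n Q" "mvars Q \<subseteq> mvars C" "ev Q = ev C"
    by (elim exE conjE)
  have "SMF Q" unfolding SMF_def using Q(1) by (rule exI)
  moreover have "mvars Q \<subseteq> mvars P" using Q(2) C(2) by (rule order_trans)
  moreover have "md_eq P Q" unfolding ev_eq by (simp only: Q(3) C(3))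
  ultimately show ?thesis by (intro exI[of _ Q] conjI)
qed

end
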